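(* Let $\delta>0$, $\alpha\in(0,2)$ and $\alpha_0\in(0,1)$, and suppose that $$\limsup_{|x|\to\infty}\bigg[\Big(\sup_{|z|\ge |x|}e^{-V(z)}\Big)e^{\delta|x|}|x|^{d+\alpha-\alpha_0}\bigg]=0.$$ Then there exists a constant $C_1>0$ such that for all $f\in C_b^\infty(\mathbb R^d)$, $$\int\big(f(x)-\mu_V(f)\big)^2\frac{e^{V(x)-\delta|x|}}{(1+|x|)^{d+\alpha}}\,\mu_V(dx)\le C_1 D_{\alpha,V,\delta}(f,f).$$
   Context: Let $d\ge1$. $V:\mathbb R^d\to\mathbb R$ is a locally bounded measurable function such that $e^{-V}$ is bounded and $\int e^{-V(x)}dx<\infty$; $\mu_V(dx)=\frac{e^{-V(x)}}{\int e^{-V(y)}dy}dx$, and $\mu_V(f)=\int f\,d\mu_V$. $C_b^\infty(\mathbb R^d)$ is the set of smooth functions on $\mathbb R^d$ that are bounded together with all their derivatives. For $\alpha\in(0,2)$, $\delta\ge0$, $$D_{\alpha,V,\delta}(f,f):=\iint\frac{(f(y)-f(x))^2}{|y-x|^{d+\alpha}}e^{-\delta|y-x|}\,dy\,\mu_V(dx).$$ *)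

theory Defs
  imports "HOL-Analysis.Analysis"
begin

fun iter_deriv :: "'a::euclidean_space list \<Rightarrow> ('a \<Rightarrow> real) \<Rightarrow> 'a \<Rightarrow> real" where
  "iter_deriv [] f = f"
| "iter_deriv (v # vs) f = (\<lambda>x. frechet_derivative (iter_deriv vs f) (at x) v)"

definition Cb_inf :: "('a::euclidean_space \<Rightarrow> real) \<Rightarrow> bool" where
  "Cb_inf f \<longleftrightarrow> (\<forall>vs \<in> lists Basis.
      (\<forall>x. iter_deriv vs f differentiable (at x)) \<and> bounded (range (iter_deriv vs f)))"

definition ZV :: "('a::euclidean_space \<Rightarrow> real) \<Rightarrow> real" where
  "ZV V = (\<integral>x. exp (- V x) \<partial>lborel)"

definition muV :: "('a::euclidean_space \<Rightarrow> real) \<Rightarrow> 'a measure" where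
  "muV V = density lborel (\<lambda>x. ennreal (exp (- V x) / ZV V))"

definition muV_int :: "('a::euclidean_space \<Rightarrow> real) \<Rightarrow> ('a \<Rightarrow> real) \<Rightarrow> real" where
  "muV_int V f = (\<integral>x. f x \<partial>muV V)"

definition Dform :: "real \<Rightarrow> ('a::euclidean_space \<Rightarrow> real) \<Rightarrow> real \<Rightarrow> ('a \<Rightarrow> real) \<Rightarrow> ennreal" where
  "Dform \<alpha> V \<delta> f = (\<integral>\<^sup>+x. (\<integral>\<^sup>+y. ennreal ((f y - f x)\<^sup>2 / norm (y - x) powr (real DIM('a) + \<alpha>)
        * exp (- \<delta> * norm (y - x))) \<partial>lborel) \<partial>muV V)"

end

theory Submission
  imports Defs "HOL-Probability.Distributions"
begin

lemma exp_abs_int_1d: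
  fixes l :: real assumes l: "l > 0"
  shows "(\<integral>\<^sup>+x. ennreal (exp (- l * \<bar>x\<bar>)) \<partial>lborel) < \<infinity>"
proof -
  have P: "(\<integral>\<^sup>+x. ennreal (exponential_density l x) \<partial>lborel) = 1"
    using prob_space.emeasure_space_1[OF prob_space_exponential_density[OF l]]
    by (simp add: emeasure_density)
  have P2: "(\<integral>\<^sup>+x. ennreal (exponential_density l (- x)) \<partial>lborel) = 1"
    using nn_integral_real_affine[of "\<lambda>x. ennreal (exponential_density l x)" "-1" 0] P
    by simp
  have "(\<integral>\<^sup>+x. ennreal (exp (- l * \<bar>x\<bar>)) \<partial>lborel)
     \<le> (\<integral>\<^sup>+x. ennreal (1/l) * (ennreal (exponential_density l x) + ennreal (exponential_density l (- x))) \<partial>lborel)"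
  proof (rule nn_integral_mono)
    fix x :: real
    have "exp (- l * \<bar>x\<bar>) \<le> (1/l) * (exponential_density l x + exponential_density l (- x))"
      using l by (auto simp: exponential_density_def field_simps abs_if)
    then show "ennreal (exp (- l * \<bar>x\<bar>)) \<le> ennreal (1/l) * (ennreal (exponential_density l x) + ennreal (exponential_density l (- x)))"
      using l by (simp add: ennreal_mult[symmetric] ennreal_plus[symmetric] exponential_density_nonneg del: ennreal_plus)
  qed
  also have "\<dots> = ennreal (1/l) * 2"
    by (subst nn_integral_cmult) (auto simp: nn_integral_add P P2)
  finally show ?thesis by (simp add: ennreal_mult_less_top order_le_less_trans)
qed

lemma exp_norm_int:
  fixes e :: real assumes e: "e > 0"
  shows "(\<integral>\<^sup>+x. ennreal (exp (- e * norm x)) \<partial>(lborel::'a::euclidean_space measure)) < \<infinity>"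
proof -
  define l where "l = e / real DIM('a)"
  have l: "l > 0" using e by (simp add: l_def)
  have "(\<integral>\<^sup>+x. ennreal (exp (- e * norm x)) \<partial>(lborel::'a measure))
      \<le> (\<integral>\<^sup>+x. (\<Prod>b\<in>Basis. ennreal (exp (- l * \<bar>x \<bullet> b\<bar>))) \<partial>(lborel::'a measure))"
  proof (rule nn_integral_mono)
    fix x :: 'a
    have "(\<Sum>b\<in>Basis. l * \<bar>x \<bullet> b\<bar>) \<le> (\<Sum>b\<in>(Basis::'a set). l * norm x)"
      using l by (intro sum_mono mult_left_mono) (auto simp: Basis_le_norm)
    also have "\<dots> = e * norm x" using e by (simp add: l_def)
    finally have "exp (- e * norm x) \<le> exp (- (\<Sum>b\<in>Basis. l * \<bar>x \<bullet> b\<bar>))" by simp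
    also have "\<dots> = (\<Prod>b\<in>Basis. exp (- l * \<bar>x \<bullet> b\<bar>))"
      by (simp add: exp_sum[symmetric] sum_negf)
    finally show "ennreal (exp (- e * norm x)) \<le> (\<Prod>b\<in>Basis. ennreal (exp (- l * \<bar>x \<bullet> b\<bar>)))"
      by (simp add: prod_ennreal ennreal_leI)
  qed
  also have "\<dots> = (\<Prod>b\<in>(Basis::'a set). (\<integral>\<^sup>+t. ennreal (exp (- l * \<bar>t\<bar>)) \<partial>lborel))"
    by (rule nn_integral_lborel_prod) auto
  also have "\<dots> < \<infinity>"
    using exp_abs_int_1d[OF l] by (simp add: power_less_top_ennreal)
  finally show ?thesis .
qed

lemma poly_exp_bound:
  fixes p d :: real assumes p: "p > 0" and d: "d > 0"
  obtains C where "C > 0" "\<And>t. t \<ge> 0 \<Longrightarrow> (1 + t) powr p \<le> C * exp (d * t)"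
proof -
  define a where "a = p / d"
  have a: "a > 0" using p d by (simp add: a_def)
  define C where "C = exp (p * (ln a - 1) + d)"
  show ?thesis
  proof (rule that[of C])
    show "C > 0" by (simp add: C_def)
    fix t :: real assume t: "t \<ge> 0"
    have "ln ((1 + t) / a) \<le> (1 + t) / a - 1" using t a by (intro ln_le_minus_one) auto
    then have "ln (1 + t) \<le> (1 + t) / a + ln a - 1" using t a by (simp add: ln_div)
    then have "p * ln (1 + t) \<le> p * ((1 + t) / a + ln a - 1)" using p by (simp add: mult_left_mono)
    also have "\<dots> = d * t + (p * (ln a - 1) + d)" using p d by (simp add: a_def field_simps)
    finally have "(1 + t) powr p \<le> exp (d * t + (p * (ln a - 1) + d))"
      using t by (simp add: powr_def)
    then show "(1 + t) powr p \<le> C * exp (d * t)" by (simp add: C_def exp_add mult.commute)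
  qed
qed

lemma exp_poly_int:
  fixes d p :: real assumes d: "d > 0" and p: "p > 0"
  shows "(\<integral>\<^sup>+x. ennreal (exp (- d * norm x) * (1 + norm x) powr p) \<partial>(lborel::'a::euclidean_space measure)) < \<infinity>"
proof -
  obtain C where C: "C > 0" "\<And>t. t \<ge> 0 \<Longrightarrow> (1 + t) powr p \<le> C * exp ((d/2) * t)"
    using poly_exp_bound[OF p, of "d/2"] d by auto
  have "(\<integral>\<^sup>+x. ennreal (exp (- d * norm x) * (1 + norm x) powr p) \<partial>(lborel::'a measure))
     \<le> (\<integral>\<^sup>+x. ennreal C * ennreal (exp (- (d/2) * norm x)) \<partial>(lborel::'a measure))"
  proof (rule nn_integral_mono)
    fix x :: 'a
    have "exp (- d * norm x) * (1 + norm x) powr p \<le> exp (- d * norm x) * (C * exp ((d/2) * norm x))"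
      by (intro mult_left_mono C) auto
    also have "\<dots> = C * exp (- (d/2) * norm x)"
      by (simp add: mult_exp_exp algebra_simps)
    finally show "ennreal (exp (- d * norm x) * (1 + norm x) powr p) \<le> ennreal C * ennreal (exp (- (d/2) * norm x))"
      using C by (simp add: ennreal_mult[symmetric])
  qed
  also have "\<dots> = ennreal C * (\<integral>\<^sup>+x. ennreal (exp (- (d/2) * norm x)) \<partial>(lborel::'a measure))"
    by (rule nn_integral_cmult) auto
  also have "\<dots> < \<infinity>" using exp_norm_int[of "d/2", where 'a='a] d by (simp add: ennreal_mult_less_top)
  finally show ?thesis .
qed

lemma jensen_aux:
  fixes N :: "'b measure" and g :: "'b \<Rightarrow> real"
  assumes fin: "finite_measure N" and P: "measure N (space N) > 0"
    and g[measurable]: "g \<in> borel_measurable N" and gb: "\<And>x. \<bar>g x\<bar> \<le> F"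
  shows "ennreal (measure N (space N) * (a - (\<integral>x. g x \<partial>N) / measure N (space N))\<^sup>2)
           \<le> (\<integral>\<^sup>+x. ennreal ((a - g x)\<^sup>2) \<partial>N)"
proof -
  interpret finite_measure N by (rule fin)
  define P where "P = measure N (space N)"
  define m where "m = (\<integral>x. g x \<partial>N) / P"
  have Pp: "P > 0" using P by (simp add: P_def)
  have ig: "integrable N g"
    by (rule integrable_const_bound[of _ F]) (auto simp: gb)
  have ig2: "integrable N (\<lambda>x. (a - g x)\<^sup>2)"
  proof (rule integrable_const_bound[of _ "(\<bar>a\<bar> + F)\<^sup>2"])
    show "AE x in N. norm ((a - g x)\<^sup>2) \<le> (\<bar>a\<bar> + F)\<^sup>2"
    proof (rule AE_I2)
      fix x
      have "\<bar>a - g x\<bar> \<le> \<bar>a\<bar> + F" using gb[of x] by linarith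
      then have "\<bar>a - g x\<bar>\<^sup>2 \<le> (\<bar>a\<bar> + F)\<^sup>2" by (intro power_mono) auto
      then show "norm ((a - g x)\<^sup>2) \<le> (\<bar>a\<bar> + F)\<^sup>2" by simp
    qed
  qed simp
  have im2: "integrable N (\<lambda>x. (m - g x)\<^sup>2)"
  proof (rule integrable_const_bound[of _ "(\<bar>m\<bar> + F)\<^sup>2"])
    show "AE x in N. norm ((m - g x)\<^sup>2) \<le> (\<bar>m\<bar> + F)\<^sup>2"
    proof (rule AE_I2)
      fix x
      have "\<bar>m - g x\<bar> \<le> \<bar>m\<bar> + F" using gb[of x] by linarith
      then have "\<bar>m - g x\<bar>\<^sup>2 \<le> (\<bar>m\<bar> + F)\<^sup>2" by (intro power_mono) auto
      then show "norm ((m - g x)\<^sup>2) \<le> (\<bar>m\<bar> + F)\<^sup>2" by simp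
    qed
  qed simp
  have eq: "\<And>x. (a - g x)\<^sup>2 = (a - m)\<^sup>2 + 2 * (a - m) * m - 2 * (a - m) * g x + (m - g x)\<^sup>2"
    by (simp add: power2_eq_square algebra_simps)
  have "(\<integral>x. (a - g x)\<^sup>2 \<partial>N) = (\<integral>x. ((a - m)\<^sup>2 + 2 * (a - m) * m) - 2 * (a - m) * g x + (m - g x)\<^sup>2 \<partial>N)"
    by (simp add: eq)
  also have "\<dots> = ((a - m)\<^sup>2 + 2 * (a - m) * m) * P - 2 * (a - m) * (\<integral>x. g x \<partial>N) + (\<integral>x. (m - g x)\<^sup>2 \<partial>N)"
    using ig im2 by (simp add: P_def)
  also have "(\<integral>x. g x \<partial>N) = m * P" using Pp by (simp add: m_def)
  finally have "(\<integral>x. (a - g x)\<^sup>2 \<partial>N) = P * (a - m)\<^sup>2 + (\<integral>x. (m - g x)\<^sup>2 \<partial>N)"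
    by (simp add: algebra_simps)
  moreover have "(\<integral>x. (m - g x)\<^sup>2 \<partial>N) \<ge> 0" by simp
  ultimately have le: "P * (a - m)\<^sup>2 \<le> (\<integral>x. (a - g x)\<^sup>2 \<partial>N)" by linarith
  have "(\<integral>\<^sup>+x. ennreal ((a - g x)\<^sup>2) \<partial>N) = ennreal (\<integral>x. (a - g x)\<^sup>2 \<partial>N)"
    using ig2 by (intro nn_integral_eq_integral) auto
  with le show ?thesis by (simp add: P_def m_def)
qed

lemma kernel_bound:
  fixes x y :: "'a::euclidean_space" and a R p \<delta> :: real
  assumes a: "a \<ge> 0" "y = x \<Longrightarrow> a = 0" and x: "norm x \<le> R" and R: "R \<ge> 1"
    and p: "p > 0" and \<delta>: "\<delta> > 0"
  shows "a * (exp (- \<delta> * norm y) / (1 + norm y) powr p)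
     \<le> R powr p * exp (\<delta> * R) * (a / norm (y - x) powr p * exp (- \<delta> * norm (y - x)))"
proof (cases "y = x")
  case True then show ?thesis using a by simp
next
  case False
  define t where "t = norm (y - x)"
  have t: "t > 0" using False by (simp add: t_def)
  have t1: "t \<le> norm y + R" using x norm_triangle_ineq4[of y x] by (simp add: t_def)
  also have "\<dots> \<le> R * (1 + norm y)" using R by (simp add: algebra_simps) (metis mult_left_mono mult.commute R norm_ge_zero mult_1 mult.left_commute order_trans le_add_same_cancel1 add_le_cancel_left mult_le_cancel_left1 linorder_not_le order_less_le_trans zero_less_one)
  finally have t2: "t powr p \<le> R powr p * (1 + norm y) powr p"
    using t p R by (simp add: powr_mult[symmetric] powr_mono2)
  have e: "exp (- \<delta> * norm y) \<le> exp (\<delta> * R) * exp (- \<delta> * t)"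
  proof -
    have "\<delta> * t \<le> \<delta> * (norm y + R)" using t1 \<delta> by (intro mult_left_mono) auto
    then show ?thesis by (simp add: mult_exp_exp algebra_simps)
  qed
  have pos: "(1 + norm y) powr p > 0" "t powr p > 0" using t by (auto intro!: powr_gt_zero[THEN iffD2] simp: add_pos_nonneg) (smt (verit) norm_ge_zero)
  have "exp (- \<delta> * norm y) / (1 + norm y) powr p \<le> exp (\<delta> * R) * exp (- \<delta> * t) / (1 + norm y) powr p"
    using e pos by (simp add: divide_right_mono)
  also have "\<dots> \<le> exp (\<delta> * R) * exp (- \<delta> * t) * (R powr p / t powr p)"
  proof -
    have "1 / (1 + norm y) powr p \<le> R powr p / t powr p"
      using t2 pos by (simp add: field_simps)
    then show ?thesis using mult_left_mono[of "1 / (1 + norm y) powr p" "R powr p / t powr p" "exp (\<delta> * R) * exp (- \<delta> * t)"]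
      by simp
  qed
  finally have le: "exp (- \<delta> * norm y) / (1 + norm y) powr p \<le> exp (\<delta> * R) * exp (- \<delta> * t) * (R powr p / t powr p)" .
  have "a * (exp (- \<delta> * norm y) / (1 + norm y) powr p) \<le> a * (exp (\<delta> * R) * exp (- \<delta> * t) * (R powr p / t powr p))"
    using le a(1) by (rule mult_left_mono)
  then show ?thesis by (simp add: t_def field_simps)
qed

theorem theorem1p1:
  fixes V :: "'a::euclidean_space \<Rightarrow> real"
    and \<delta> \<alpha> \<alpha>0 :: real
  assumes V_meas: "V \<in> borel_measurable borel"
    and V_locbdd: "\<And>K. compact K \<Longrightarrow> bounded (V ` K)"
    and expV_bdd: "bounded (range (\<lambda>x. exp (- V x)))"
    and expV_int: "integrable lborel (\<lambda>x. exp (- V x))"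
    and \<delta>: "\<delta> > 0"
    and \<alpha>: "0 < \<alpha>" "\<alpha> < 2"
    and \<alpha>0: "0 < \<alpha>0" "\<alpha>0 < 1"
    and tail: "Limsup at_infinity (\<lambda>x::'a. ereal ((SUP z \<in> {z. norm z \<ge> norm x}. exp (- V z))
                  * exp (\<delta> * norm x) * norm x powr (real DIM('a) + \<alpha> - \<alpha>0))) = 0"
  shows "\<exists>C1>0. \<forall>f. Cb_inf f \<longrightarrow>
           (\<integral>\<^sup>+x. ennreal ((f x - muV_int V f)\<^sup>2 * exp (V x - \<delta> * norm x)
                     / (1 + norm x) powr (real DIM('a) + \<alpha>)) \<partial>muV V)
           \<le> ennreal C1 * Dform \<alpha> V \<delta> f"
proof -
  note [measurable] = V_meas
  define Z where "Z = ZV V"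
  define \<rho> where "\<rho> x = exp (- V x) / Z" for x
  define \<mu> where "\<mu> = muV V"
  define p where "p = real DIM('a) + \<alpha>"
  have p: "p > 0" using \<alpha> by (simp add: p_def)
  have Zpos: "Z > 0"
  proof (rule ccontr)
    assume "\<not> Z > 0"
    moreover have "Z \<ge> 0" unfolding Z_def ZV_def by simp
    ultimately have "Z = 0" by simp
    then have "AE x in lborel. exp (- V x) = 0"
      using integral_nonneg_eq_0_iff_AE[OF expV_int] by (simp add: Z_def ZV_def)
    then have "AE x in (lborel::'a measure). False" by simp
    then have "emeasure (lborel::'a measure) (space lborel) = 0"
      using ae_filter_eq_bot_iff trivial_limit_def by metis
    then show False by simp
  qed
  have \<rho>_meas[measurable]: "\<rho> \<in> borel_measurable borel" unfolding \<rho>_def by measurable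
  have \<rho>_pos: "\<rho> x > 0" for x using Zpos by (simp add: \<rho>_def)
  have \<mu>_def': "\<mu> = density lborel (\<lambda>x. ennreal (\<rho> x))"
    by (simp add: \<mu>_def muV_def \<rho>_def Z_def)
  have sets_\<mu>[measurable_cong]: "sets \<mu> = sets borel" by (simp add: \<mu>_def')
  have space_\<mu>: "space \<mu> = UNIV" by (simp add: \<mu>_def')
  have int_\<rho>: "integrable lborel \<rho>" unfolding \<rho>_def using expV_int by simp
  have "emeasure \<mu> (space \<mu>) = 1"
  proof -
    have "emeasure \<mu> (space \<mu>) = (\<integral>\<^sup>+x. ennreal (\<rho> x) \<partial>lborel)"
      by (simp add: \<mu>_def' emeasure_density space_\<mu>)
    also have "\<dots> = ennreal (\<integral>x. \<rho> x \<partial>lborel)"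
      using int_\<rho> \<rho>_pos by (intro nn_integral_eq_integral) (auto intro: less_imp_le)
    also have "(\<integral>x. \<rho> x \<partial>lborel) = 1"
      using Zpos by (simp add: \<rho>_def Z_def ZV_def)
    finally show ?thesis by simp
  qed
  then interpret \<mu>: prob_space \<mu> by (rule prob_spaceI)
  obtain M where M: "\<And>x. exp (- V x) \<le> M"
    using expV_bdd unfolding bounded_iff by auto
  define q where "q = real DIM('a) + \<alpha> - \<alpha>0"
  have d1: "real DIM('a) \<ge> 1" using DIM_positive[where 'a='a] by (simp add: Suc_le_eq)
  have q: "q > 0" using \<alpha> \<alpha>0 d1 unfolding q_def by linarith
  have "eventually (\<lambda>x::'a. ereal ((SUP z \<in> {z. norm z \<ge> norm x}. exp (- V z))
                  * exp (\<delta> * norm x) * norm x powr q) < 1) at_infinity"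
    using tail by (intro Limsup_lessD) (simp add: q_def)
  then obtain R0 where R0: "\<And>x::'a. R0 \<le> norm x \<Longrightarrow> (SUP z \<in> {z. norm z \<ge> norm x}. exp (- V z))
                  * exp (\<delta> * norm x) * norm x powr q < 1"
    unfolding eventually_at_infinity by auto
  define R1 where "R1 = max R0 1"
  have tailb: "exp (- V x) \<le> exp (- \<delta> * norm x)" if x: "norm x \<ge> R1" for x
  proof -
    have bdd: "bdd_above ((\<lambda>z. exp (- V z)) ` {z. norm z \<ge> norm x})"
      by (rule bdd_aboveI2[where M=M]) (rule M)
    have "exp (- V x) \<le> (SUP z \<in> {z. norm z \<ge> norm x}. exp (- V z))"
      by (rule cSUP_upper[OF _ bdd]) auto
    moreover have "norm x powr q \<ge> 1" using x q by (intro ge_one_powr_ge_zero) (auto simp: R1_def)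
    moreover have "(SUP z \<in> {z. norm z \<ge> norm x}. exp (- V z)) * exp (\<delta> * norm x) * norm x powr q < 1"
      using R0 x by (simp add: R1_def)
    ultimately have "exp (- V x) * exp (\<delta> * norm x) * 1 < 1"
      by (smt (verit, best) exp_gt_zero mult_le_cancel_left1 mult_mono mult_nonneg_nonneg)
    then have "exp (- V x) < exp (- \<delta> * norm x)"
      by (simp add: exp_minus field_simps)
    then show ?thesis by simp
  qed
  have "\<exists>n::nat. emeasure \<mu> (cball 0 (real n)) \<noteq> 0"
  proof (rule ccontr)
    assume "\<not> ?thesis"
    then have "(\<Union>n::nat. cball (0::'a) (real n)) \<in> null_sets \<mu>"
      by (intro null_sets_UN) (auto simp: null_sets_def sets_\<mu>)
    moreover have "(\<Union>n::nat. cball (0::'a) (real n)) = UNIV"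
      by (auto simp: real_arch_simple)
    ultimately show False using \<mu>.emeasure_space_1 space_\<mu> by (auto simp: null_sets_def)
  qed
  then obtain n :: nat where n: "emeasure \<mu> (cball 0 (real n)) \<noteq> 0" by auto
  define R where "R = max (real n) R1"
  define B where "B = cball (0::'a) R"
  have R: "R \<ge> 1" "R \<ge> R1" by (auto simp: R_def R1_def)
  have B[measurable]: "B \<in> sets borel" by (simp add: B_def)
  have "emeasure \<mu> (cball 0 (real n)) \<le> emeasure \<mu> B"
    by (intro emeasure_mono) (auto simp: B_def R_def sets_\<mu>)
  with n have muB: "emeasure \<mu> B \<noteq> 0" by auto
  define N where "N = density \<mu> (indicator B)"
  have sets_N[measurable_cong]: "sets N = sets borel" by (simp add: N_def sets_\<mu>)
  have space_N: "space N = UNIV" by (simp add: N_def space_\<mu>)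
  have emN: "emeasure N (space N) = emeasure \<mu> B"
    by (simp add: N_def emeasure_restricted sets_\<mu> space_\<mu>)
  have finN: "finite_measure N"
    by (rule finite_measureI) (simp add: emN \<mu>.emeasure_finite)
  define P where "P = measure N (space N)"
  have PB: "P = measure \<mu> B" by (simp add: P_def measure_def emN)
  have Ppos: "P > 0"
    using muB \<mu>.emeasure_finite[of B] by (simp add: PB measure_def enn2real_positive_iff less_top[symmetric] zero_less_iff_neq_zero)
  define w where "w x = exp (- \<delta> * norm x) / (1 + norm x) powr p" for x :: 'a
  have pw: "(1 + norm x) powr p > 0" for x :: 'a
  proof -
    have "1 + norm x \<noteq> 0" using norm_ge_zero[of x] by linarith
    then show ?thesis by simp
  qed
  have w_pos: "w x > 0" for x
    unfolding w_def using pw[of x] by simp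
  have w_meas[measurable]: "w \<in> borel_measurable borel" unfolding w_def by measurable
  define W where "W = (\<integral>\<^sup>+x. ennreal (w x) \<partial>lborel)"
  have W: "W < \<infinity>"
  proof -
    have "W \<le> (\<integral>\<^sup>+x. ennreal (exp (- \<delta> * norm x)) \<partial>(lborel::'a measure))"
      unfolding W_def
    proof (rule nn_integral_mono)
      fix x :: 'a
      have "(1 + norm x) powr p \<ge> 1" using p by (intro ge_one_powr_ge_zero) auto
      then have "w x \<le> exp (- \<delta> * norm x)"
        unfolding w_def by (simp add: divide_le_eq)
      then show "ennreal (w x) \<le> ennreal (exp (- \<delta> * norm x))" by (rule ennreal_leI)
    qed
    also have "\<dots> < \<infinity>" using exp_norm_int[OF \<delta>, where 'a='a] by simp
    finally show ?thesis .
  qed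
  define K where "K = (\<integral>\<^sup>+x. ennreal ((\<rho> x)\<^sup>2 / w x) \<partial>lborel)"
  define C0 where "C0 = max 1 (M\<^sup>2 * exp (2 * \<delta> * R1))"
  have K: "K < \<infinity>"
  proof -
    have "K \<le> (\<integral>\<^sup>+x. ennreal (C0 / Z\<^sup>2) * ennreal (exp (- \<delta> * norm x) * (1 + norm x) powr p) \<partial>(lborel::'a measure))"
      unfolding K_def
    proof (rule nn_integral_mono)
      fix x :: 'a
      have e2: "(exp (- V x))\<^sup>2 * exp (\<delta> * norm x) \<le> C0 * exp (- \<delta> * norm x)"
      proof (cases "norm x \<ge> R1")
        case True
        have "(exp (- V x))\<^sup>2 \<le> (exp (- \<delta> * norm x))\<^sup>2"
          using tailb[OF True] by (intro power_mono) auto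
        then have "(exp (- V x))\<^sup>2 * exp (\<delta> * norm x) \<le> (exp (- \<delta> * norm x))\<^sup>2 * exp (\<delta> * norm x)"
          by (intro mult_right_mono) auto
        also have "\<dots> = exp (- \<delta> * norm x)"
          by (simp add: power2_eq_square mult_exp_exp)
        also have "\<dots> \<le> C0 * exp (- \<delta> * norm x)"
        proof -
          have "1 \<le> C0" by (simp add: C0_def)
          then show ?thesis using mult_right_mono[of 1 C0 "exp (- \<delta> * norm x)"] by simp
        qed
        finally show ?thesis .
      next
        case False
        have M0: "M \<ge> 0" using M[of x] by (smt (verit) exp_gt_zero)
        have "(exp (- V x))\<^sup>2 \<le> M\<^sup>2" using M[of x] by (intro power_mono) auto
        moreover have "exp (\<delta> * norm x) \<le> exp (2 * \<delta> * R1) * exp (- \<delta> * norm x)"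
          using False \<delta> by (simp add: mult_exp_exp)
        ultimately have "(exp (- V x))\<^sup>2 * exp (\<delta> * norm x) \<le> M\<^sup>2 * (exp (2 * \<delta> * R1) * exp (- \<delta> * norm x))"
          by (intro mult_mono) auto
        also have "\<dots> \<le> C0 * exp (- \<delta> * norm x)"
          by (simp only: mult.assoc[symmetric]) (intro mult_right_mono, auto simp: C0_def)
        finally show ?thesis .
      qed
      have "(\<rho> x)\<^sup>2 / w x = (exp (- V x))\<^sup>2 * exp (\<delta> * norm x) * (1 + norm x) powr p / Z\<^sup>2"
        using Zpos by (simp add: \<rho>_def w_def exp_minus field_simps power2_eq_square)
      also have "\<dots> \<le> C0 * exp (- \<delta> * norm x) * (1 + norm x) powr p / Z\<^sup>2"
        using e2 Zpos by (intro divide_right_mono mult_right_mono) auto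
      finally show "ennreal ((\<rho> x)\<^sup>2 / w x) \<le> ennreal (C0 / Z\<^sup>2) * ennreal (exp (- \<delta> * norm x) * (1 + norm x) powr p)"
        using Zpos by (simp add: ennreal_mult[symmetric] C0_def ennreal_leI)
    qed
    also have "\<dots> = ennreal (C0 / Z\<^sup>2) * (\<integral>\<^sup>+x. ennreal (exp (- \<delta> * norm x) * (1 + norm x) powr p) \<partial>(lborel::'a measure))"
      by (rule nn_integral_cmult) auto
    also have "\<dots> < \<infinity>" using exp_poly_int[OF \<delta> p, where 'a='a] by (simp add: ennreal_mult_less_top)
    finally show ?thesis .
  qed
  define CR where "CR = R powr p * exp (\<delta> * R)"
  have CR: "CR > 0" using R by (simp add: CR_def)
  define C1 where "C1 = 2 / Z * (1 + enn2real K * enn2real W) * (CR / P)"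
  have C1: "C1 > 0" using Zpos CR Ppos by (simp add: C1_def add_pos_nonneg)
  show ?thesis
  proof (intro exI[of _ C1] conjI allI impI C1)
    fix f :: "'a \<Rightarrow> real" assume f: "Cb_inf f"
    have "(\<forall>x. f differentiable (at x)) \<and> bounded (range f)"
      using f unfolding Cb_inf_def by (metis iter_deriv.simps(1) lists.Nil)
    then have fd: "\<And>x. f differentiable (at x)" and fb: "bounded (range f)" by auto
    have [measurable]: "f \<in> borel_measurable borel"
      by (intro borel_measurable_continuous_onI continuous_at_imp_continuous_on ballI
          differentiable_imp_continuous_within fd)
    obtain F where F: "\<And>x. \<bar>f x\<bar> \<le> F" using fb unfolding bounded_iff by auto
    define c where "c = muV_int V f"
    define m where "m = (\<integral>x. f x \<partial>N) / P"
    define A where "A = (\<integral>\<^sup>+y. ennreal ((f y - m)\<^sup>2 * w y) \<partial>lborel)"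
    define D where "D = Dform \<alpha> V \<delta> f"
    have fN[measurable]: "f \<in> borel_measurable N"
      using measurable_cong_sets[OF sets_N refl, of borel] by simp
    have J: "ennreal (P * (a - m)\<^sup>2) \<le> (\<integral>\<^sup>+x. ennreal ((a - f x)\<^sup>2) \<partial>N)" for a
      using jensen_aux[OF finN _ fN F, of a] Ppos by (simp add: P_def m_def)
    interpret N: finite_measure N by (rule finN)
    interpret NL: pair_sigma_finite N "lborel::'a measure" by intro_locales
    have step1: "ennreal P * A \<le> ennreal CR * D"
    proof -
      have "ennreal P * A = (\<integral>\<^sup>+y. ennreal (P * (f y - m)\<^sup>2) * ennreal (w y) \<partial>lborel)"
        unfolding A_def
      proof (subst nn_integral_cmult[symmetric], simp, intro nn_integral_cong)
        fix y :: 'a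
        show "ennreal P * ennreal ((f y - m)\<^sup>2 * w y) = ennreal (P * (f y - m)\<^sup>2) * ennreal (w y)"
          using Ppos w_pos[of y] by (simp add: ennreal_mult[symmetric] mult.assoc)
      qed
      also have "\<dots> \<le> (\<integral>\<^sup>+y. (\<integral>\<^sup>+x. ennreal ((f y - f x)\<^sup>2) \<partial>N) * ennreal (w y) \<partial>lborel)"
        by (intro nn_integral_mono mult_right_mono J) simp
      also have "\<dots> = (\<integral>\<^sup>+y. (\<integral>\<^sup>+x. ennreal ((f y - f x)\<^sup>2) * ennreal (w y) \<partial>N) \<partial>lborel)"
        by (intro nn_integral_cong nn_integral_multc[symmetric]) measurable
      also have "\<dots> = (\<integral>\<^sup>+x. (\<integral>\<^sup>+y. ennreal ((f y - f x)\<^sup>2) * ennreal (w y) \<partial>lborel) \<partial>N)"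
        by (rule NL.Fubini') measurable
      also have "\<dots> = (\<integral>\<^sup>+x. indicator B x * (\<integral>\<^sup>+y. ennreal ((f y - f x)\<^sup>2) * ennreal (w y) \<partial>lborel) \<partial>\<mu>)"
        unfolding N_def by (rule nn_integral_density) measurable
      also have "\<dots> \<le> (\<integral>\<^sup>+x. ennreal CR * (\<integral>\<^sup>+y. ennreal ((f y - f x)\<^sup>2 / norm (y - x) powr p * exp (- \<delta> * norm (y - x))) \<partial>lborel) \<partial>\<mu>)"
      proof (rule nn_integral_mono)
        fix x :: 'a
        show "indicator B x * (\<integral>\<^sup>+y. ennreal ((f y - f x)\<^sup>2) * ennreal (w y) \<partial>lborel)
          \<le> ennreal CR * (\<integral>\<^sup>+y. ennreal ((f y - f x)\<^sup>2 / norm (y - x) powr p * exp (- \<delta> * norm (y - x))) \<partial>lborel)"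
        proof (cases "x \<in> B")
          case False then show ?thesis by simp
        next
          case True
          then have xR: "norm x \<le> R" by (simp add: B_def)
          have "(\<integral>\<^sup>+y. ennreal ((f y - f x)\<^sup>2) * ennreal (w y) \<partial>lborel)
              \<le> (\<integral>\<^sup>+y. ennreal CR * ennreal ((f y - f x)\<^sup>2 / norm (y - x) powr p * exp (- \<delta> * norm (y - x))) \<partial>lborel)"
          proof (rule nn_integral_mono)
            fix y :: 'a
            have "(f y - f x)\<^sup>2 * w y \<le> CR * ((f y - f x)\<^sup>2 / norm (y - x) powr p * exp (- \<delta> * norm (y - x)))"
              unfolding w_def CR_def by (rule kernel_bound[OF _ _ xR R(1) p \<delta>]) auto
            then have "ennreal ((f y - f x)\<^sup>2 * w y) \<le> ennreal (CR * ((f y - f x)\<^sup>2 / norm (y - x) powr p * exp (- \<delta> * norm (y - x))))"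
              by (rule ennreal_leI)
            then show "ennreal ((f y - f x)\<^sup>2) * ennreal (w y) \<le> ennreal CR * ennreal ((f y - f x)\<^sup>2 / norm (y - x) powr p * exp (- \<delta> * norm (y - x)))"
              using CR w_pos[of y] by (simp add: ennreal_mult[symmetric])
          qed
          also have "\<dots> = ennreal CR * (\<integral>\<^sup>+y. ennreal ((f y - f x)\<^sup>2 / norm (y - x) powr p * exp (- \<delta> * norm (y - x))) \<partial>lborel)"
            by (rule nn_integral_cmult) simp
          finally show ?thesis using True by simp
        qed
      qed
      also have "\<dots> = ennreal CR * (\<integral>\<^sup>+x. (\<integral>\<^sup>+y. ennreal ((f y - f x)\<^sup>2 / norm (y - x) powr p * exp (- \<delta> * norm (y - x))) \<partial>lborel) \<partial>\<mu>)"
        by (rule nn_integral_cmult) measurable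
      also have "\<dots> = ennreal CR * D"
        by (simp add: D_def Dform_def \<mu>_def p_def)
      finally show ?thesis .
    qed
    have fint: "integrable \<mu> f"
      by (rule \<mu>.integrable_const_bound[of _ F]) (auto simp: F)
    have step2: "ennreal ((m - c)\<^sup>2) \<le> A * K"
    proof -
      have "c - m = (\<integral>x. f x - m \<partial>\<mu>)"
        using fint by (simp add: c_def muV_int_def \<mu>_def[symmetric] \<mu>.prob_space)
      then have "ennreal (norm (c - m)) \<le> (\<integral>\<^sup>+x. ennreal (norm (f x - m)) \<partial>\<mu>)"
        using integral_norm_bound_ennreal[of \<mu> "\<lambda>x. f x - m"] fint by simp
      also have "\<dots> = (\<integral>\<^sup>+x. ennreal (\<rho> x) * ennreal (norm (f x - m)) \<partial>lborel)"
        by (simp add: \<mu>_def' nn_integral_density)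
      also have "\<dots> = (\<integral>\<^sup>+x. ennreal (\<bar>f x - m\<bar> * sqrt (w x)) * ennreal (\<rho> x / sqrt (w x)) \<partial>lborel)"
      proof (rule nn_integral_cong)
        fix x :: 'a
        have "sqrt (w x) > 0" using w_pos[of x] by simp
        then have "\<bar>f x - m\<bar> * sqrt (w x) * (\<rho> x / sqrt (w x)) = \<rho> x * \<bar>f x - m\<bar>" by simp
        then show "ennreal (\<rho> x) * ennreal (norm (f x - m)) = ennreal (\<bar>f x - m\<bar> * sqrt (w x)) * ennreal (\<rho> x / sqrt (w x))"
          using w_pos[of x] \<rho>_pos[of x] by (simp add: ennreal_mult[symmetric])
      qed
      finally have le1: "ennreal \<bar>c - m\<bar> \<le> (\<integral>\<^sup>+x. ennreal (\<bar>f x - m\<bar> * sqrt (w x)) * ennreal (\<rho> x / sqrt (w x)) \<partial>lborel)"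
        by simp
      have "ennreal ((m - c)\<^sup>2) = (ennreal \<bar>c - m\<bar>)\<^sup>2"
      proof -
        have "(ennreal \<bar>c - m\<bar>)\<^sup>2 = ennreal (\<bar>c - m\<bar>\<^sup>2)" by (rule ennreal_power) simp
        then show ?thesis by (simp add: power2_commute)
      qed
      also have "\<dots> \<le> (\<integral>\<^sup>+x. ennreal (\<bar>f x - m\<bar> * sqrt (w x)) * ennreal (\<rho> x / sqrt (w x)) \<partial>lborel)\<^sup>2"
        using le1 by (intro power_mono) auto
      also have "\<dots> \<le> (\<integral>\<^sup>+x. (ennreal (\<bar>f x - m\<bar> * sqrt (w x)))\<^sup>2 \<partial>lborel) * (\<integral>\<^sup>+x. (ennreal (\<rho> x / sqrt (w x)))\<^sup>2 \<partial>lborel)"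
        by (rule Cauchy_Schwarz_nn_integral) auto
      also have "\<dots> = A * K"
      proof -
        have "(\<integral>\<^sup>+x. (ennreal (\<bar>f x - m\<bar> * sqrt (w x)))\<^sup>2 \<partial>lborel) = A"
          unfolding A_def
        proof (rule nn_integral_cong)
          fix x :: 'a
          show "(ennreal (\<bar>f x - m\<bar> * sqrt (w x)))\<^sup>2 = ennreal ((f x - m)\<^sup>2 * w x)"
            using w_pos[of x] by (simp add: ennreal_power power_mult_distrib)
        qed
        moreover have "(\<integral>\<^sup>+x. (ennreal (\<rho> x / sqrt (w x)))\<^sup>2 \<partial>lborel) = K"
          unfolding K_def
        proof (rule nn_integral_cong)
          fix x :: 'a
          show "(ennreal (\<rho> x / sqrt (w x)))\<^sup>2 = ennreal ((\<rho> x)\<^sup>2 / w x)"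
            using w_pos[of x] \<rho>_pos[of x] by (simp add: ennreal_power power_divide)
        qed
        ultimately show ?thesis by simp
      qed
      finally show ?thesis .
    qed
    have step3: "(\<integral>\<^sup>+x. ennreal ((f x - muV_int V f)\<^sup>2 * exp (V x - \<delta> * norm x)
                     / (1 + norm x) powr (real DIM('a) + \<alpha>)) \<partial>muV V)
          \<le> ennreal (2 / Z) * (A + ennreal ((m - c)\<^sup>2) * W)"
    proof -
      have "(\<integral>\<^sup>+x. ennreal ((f x - muV_int V f)\<^sup>2 * exp (V x - \<delta> * norm x)
                     / (1 + norm x) powr (real DIM('a) + \<alpha>)) \<partial>muV V)
         = (\<integral>\<^sup>+x. ennreal (\<rho> x) * ennreal ((f x - c)\<^sup>2 * exp (V x - \<delta> * norm x)
                     / (1 + norm x) powr p) \<partial>lborel)"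
        by (simp add: \<mu>_def[symmetric] \<mu>_def' nn_integral_density c_def p_def)
      also have "\<dots> \<le> (\<integral>\<^sup>+x. ennreal (2 / Z) * (ennreal ((f x - m)\<^sup>2 * w x) + ennreal ((m - c)\<^sup>2) * ennreal (w x)) \<partial>lborel)"
      proof (rule nn_integral_mono)
        fix x :: 'a
        have eq: "\<rho> x * ((f x - c)\<^sup>2 * exp (V x - \<delta> * norm x) / (1 + norm x) powr p) = (f x - c)\<^sup>2 * w x / Z"
        proof -
          have ee: "exp (- V x) * exp (V x - \<delta> * norm x) = exp (- \<delta> * norm x)"
            by (simp add: mult_exp_exp)
          have "\<rho> x * ((f x - c)\<^sup>2 * exp (V x - \<delta> * norm x) / (1 + norm x) powr p)
             = (f x - c)\<^sup>2 * (exp (- V x) * exp (V x - \<delta> * norm x)) / (1 + norm x) powr p / Z"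
            unfolding \<rho>_def by (simp add: ac_simps)
          also have "\<dots> = (f x - c)\<^sup>2 * w x / Z" by (simp only: ee w_def) simp
          finally show ?thesis .
        qed
        have sq: "(f x - c)\<^sup>2 \<le> 2 * (f x - m)\<^sup>2 + 2 * (m - c)\<^sup>2"
        proof -
          have "2 * (f x - m)\<^sup>2 + 2 * (m - c)\<^sup>2 - (f x - c)\<^sup>2 = (f x - 2 * m + c)\<^sup>2"
            by (simp add: power2_eq_square algebra_simps)
          moreover have "(f x - 2 * m + c)\<^sup>2 \<ge> 0" by simp
          ultimately show ?thesis by linarith
        qed
        have "(f x - c)\<^sup>2 * w x / Z \<le> (2 * (f x - m)\<^sup>2 + 2 * (m - c)\<^sup>2) * w x / Z"
          using sq w_pos[of x] Zpos by (intro divide_right_mono mult_right_mono) auto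
        also have "\<dots> = 2 / Z * ((f x - m)\<^sup>2 * w x + (m - c)\<^sup>2 * w x)"
          by (simp add: field_simps)
        finally have le0: "(f x - c)\<^sup>2 * w x / Z \<le> 2 / Z * ((f x - m)\<^sup>2 * w x + (m - c)\<^sup>2 * w x)" .
        have le: "\<rho> x * ((f x - c)\<^sup>2 * exp (V x - \<delta> * norm x) / (1 + norm x) powr p)
            \<le> 2 / Z * ((f x - m)\<^sup>2 * w x + (m - c)\<^sup>2 * w x)" unfolding eq by (rule le0)
        have "ennreal (\<rho> x) * ennreal ((f x - c)\<^sup>2 * exp (V x - \<delta> * norm x) / (1 + norm x) powr p)
           = ennreal (\<rho> x * ((f x - c)\<^sup>2 * exp (V x - \<delta> * norm x) / (1 + norm x) powr p))"
          by (intro ennreal_mult[symmetric]) (use \<rho>_pos[of x] pw[of x] in auto)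
        also have "\<dots> \<le> ennreal (2 / Z * ((f x - m)\<^sup>2 * w x + (m - c)\<^sup>2 * w x))"
          using le by (rule ennreal_leI)
        also have "\<dots> = ennreal (2 / Z) * (ennreal ((f x - m)\<^sup>2 * w x) + ennreal ((m - c)\<^sup>2) * ennreal (w x))"
        proof -
          have "ennreal (2 / Z * ((f x - m)\<^sup>2 * w x + (m - c)\<^sup>2 * w x)) = ennreal (2 / Z) * ennreal ((f x - m)\<^sup>2 * w x + (m - c)\<^sup>2 * w x)"
            by (intro ennreal_mult) (use Zpos w_pos[of x] in auto)
          also have "ennreal ((f x - m)\<^sup>2 * w x + (m - c)\<^sup>2 * w x) = ennreal ((f x - m)\<^sup>2 * w x) + ennreal ((m - c)\<^sup>2 * w x)"
            by (intro ennreal_plus) (use w_pos[of x] in auto)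
          also have "ennreal ((m - c)\<^sup>2 * w x) = ennreal ((m - c)\<^sup>2) * ennreal (w x)"
            by (intro ennreal_mult) (use w_pos[of x] in auto)
          finally show ?thesis .
        qed
        finally show "ennreal (\<rho> x) * ennreal ((f x - c)\<^sup>2 * exp (V x - \<delta> * norm x) / (1 + norm x) powr p)
           \<le> ennreal (2 / Z) * (ennreal ((f x - m)\<^sup>2 * w x) + ennreal ((m - c)\<^sup>2) * ennreal (w x))" .
      qed
      also have "\<dots> = ennreal (2 / Z) * (A + ennreal ((m - c)\<^sup>2) * W)"
        by (simp add: nn_integral_cmult nn_integral_add A_def W_def)
      finally show ?thesis .
    qed
    show "(\<integral>\<^sup>+x. ennreal ((f x - muV_int V f)\<^sup>2 * exp (V x - \<delta> * norm x)
                     / (1 + norm x) powr (real DIM('a) + \<alpha>)) \<partial>muV V)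
          \<le> ennreal C1 * Dform \<alpha> V \<delta> f"
    proof -
      obtain K' where K': "K = ennreal K'" "0 \<le> K'" using K by (cases K) auto
      obtain W' where W': "W = ennreal W'" "0 \<le> W'" using W by (cases W) auto
      have A_le: "A \<le> ennreal (CR / P) * D"
      proof -
        have "A = ennreal (1 / P) * (ennreal P * A)"
          using Ppos by (simp add: mult.assoc[symmetric] ennreal_mult[symmetric])
        also have "\<dots> \<le> ennreal (1 / P) * (ennreal CR * D)"
          using step1 by (rule mult_left_mono) simp
        also have "\<dots> = ennreal (CR / P) * D"
          using Ppos CR by (simp add: mult.assoc[symmetric] ennreal_mult[symmetric])
        finally show ?thesis .
      qed
      have "ennreal (2 / Z) * (A + ennreal ((m - c)\<^sup>2) * W) \<le> ennreal (2 / Z) * (A + A * K * W)"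
        using step2 by (intro mult_left_mono add_mono mult_right_mono) auto
      also have "\<dots> = ennreal (2 / Z * (1 + K' * W')) * A"
      proof -
        have e1: "1 + K * W = ennreal (1 + K' * W')" using K' W' by (simp add: ennreal_mult ennreal_plus)
        have "A + A * K * W = (1 + K * W) * A" by (simp add: distrib_right algebra_simps)
        then have "ennreal (2 / Z) * (A + A * K * W) = ennreal (2 / Z) * (ennreal (1 + K' * W') * A)"
          by (simp add: e1)
        also have "\<dots> = ennreal (2 / Z * (1 + K' * W')) * A"
        proof -
          have "ennreal (2 / Z) * ennreal (1 + K' * W') = ennreal (2 / Z * (1 + K' * W'))"
            using Zpos K' W' by (intro ennreal_mult[symmetric]) auto
          then show ?thesis by (metis mult.assoc)
        qed
        finally show ?thesis .
      qed
      also have "\<dots> \<le> ennreal (2 / Z * (1 + K' * W')) * (ennreal (CR / P) * D)"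
        using A_le by (rule mult_left_mono) simp
      also have "\<dots> = ennreal C1 * D"
        using Zpos K' W' CR Ppos by (simp add: C1_def ennreal_mult[symmetric] mult.assoc[symmetric])
      finally show ?thesis using step3 by (simp add: D_def)
    qed
  qed
qed

end
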